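(* Let $\mathcal F$ be a class of functions $\mathcal X\times\mathcal A\to[0,1]$ that is convex and closed under pointwise convergence. Let $H$ be a finite multiset of triples $(x',a',r')\in\mathcal X\times\mathcal A\times[0,1]$, let $(x,a)\in\mathcal X\times\mathcal A$, $\beta>0$ and $\alpha\in(0,1)$. Put $R(f)=\sum_{(x',a',r')\in H}(f(x',a')-r')^2$ and $$z^{\mathrm{high}}=\max\{f(x,a): f\in\mathcal F,\ R(f)\le \min_{f'\in\mathcal F}R(f')+\beta\},\qquad z^{\mathrm{low}}=\min\{f(x,a): f\in\mathcal F,\ R(f)\le \min_{f'\in\mathcal F}R(f')+\beta\}.$$ Then $\textsc{BinSearch}(\textsc{High},(x,a),H,\beta,\alpha)$ and $\textsc{BinSearch}(\textsc{Low},(x,a),H,\beta,\alpha)$ each terminate after $O(\log(1/\alpha))$ oracle invocations, and their outputs $z_{\mathrm{High}}$, $z_{\mathrm{Low}}$ satisfy $|z_{\mathrm{High}}-z^{\mathrm{high}}|\le\alpha$ and $|z_{\mathrm{Low}}-z^{\mathrm{low}}|\le\alpha$.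
   Context: $\mathcal A=\{1,\dots,K\}$ is a finite action set and $\mathcal X$ a context space. $\mathcal F$ convex means $\lambda f+(1-\lambda)g\in\mathcal F$ for $f,g\in\mathcal F$, $\lambda\in[0,1]$. An oracle invocation with weight $w\ge0$ returns some minimizer over $f\in\mathcal F$ of $\tilde R(f,w)=R(f)+\frac w2(f(x,a)-r)^2$, where $r=2$ for bound type \textsc{High} and $r=-1$ for \textsc{Low}. Procedure $\textsc{BinSearch}(\text{type},(x,a),H,\beta,\alpha)$: set $w_L=0$, $w_H=\beta/\alpha$; call the oracle with $w_L$ obtaining $f_L$, $z_L=f_L(x,a)$, and with $w_H$ obtaining $f_H$, $z_H=f_H(x,a)$; set $R_{\min}=R(f_L)$ and $\Delta=\alpha\beta/|r-z_L|^3$. While $|z_H-z_L|>\alpha$ and $|w_H-w_L|>\Delta$: set $w=(w_H+w_L)/2$, call the oracle with $w$ obtaining $f$ and $z=f(x,a)$; if $R(f)\ge R_{\min}+\beta$ set $(w_H,z_H)\leftarrow(w,z)$, otherwise set $(w_L,z_L)\leftarrow(w,z)$. Return $z_H$. *)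

theory Defs
  imports "HOL-Analysis.Analysis" "HOL-Library.While_Combinator" "HOL-Library.Multiset"
begin

(* Functions X x A -> R are modelled as total functions on the product type 'x * 'a.
   The class F is a set of such functions; "closed under pointwise convergence" is
   closedness in the topology of pointwise convergence (product topology on functions,
   instance from HOL-Analysis.Function_Topology). *)

datatype bound_type = High | Low

definition target :: "bound_type \<Rightarrow> real" where
  "target t = (case t of High \<Rightarrow> 2 | Low \<Rightarrow> -1)"

definition Rsq :: "('x \<times> 'a \<times> real) multiset \<Rightarrow> ('x \<times> 'a \<Rightarrow> real) \<Rightarrow> real" where
  "Rsq H f = sum_mset (image_mset (\<lambda>(x', a', r'). (f (x', a') - r')^2) H)"

definition Rtilde :: "('x \<times> 'a \<times> real) multiset \<Rightarrow> 'x \<times> 'a \<Rightarrow> real \<Rightarrow> ('x \<times> 'a \<Rightarrow> real) \<Rightarrow> real \<Rightarrow> real" where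
  "Rtilde H p r f w = Rsq H f + w / 2 * (f p - r)^2"

definition convex_class :: "('x \<times> 'a \<Rightarrow> real) set \<Rightarrow> bool" where
  "convex_class F \<longleftrightarrow> (\<forall>f\<in>F. \<forall>g\<in>F. \<forall>l::real. 0 \<le> l \<and> l \<le> 1 \<longrightarrow> (\<lambda>q. l * f q + (1 - l) * g q) \<in> F)"

(* Indexing by the call
   number allows the oracle to resolve ties arbitrarily (even history-dependently). *)
definition is_oracle :: "('x \<times> 'a \<Rightarrow> real) set \<Rightarrow> ('x \<times> 'a \<times> real) multiset \<Rightarrow> 'x \<times> 'a \<Rightarrow> real
    \<Rightarrow> (nat \<Rightarrow> real \<Rightarrow> ('x \<times> 'a \<Rightarrow> real)) \<Rightarrow> bool" where
  "is_oracle F H p r orc \<longleftrightarrow>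
     (\<forall>k w. 0 \<le> w \<longrightarrow> orc k w \<in> F \<and> (\<forall>g\<in>F. Rtilde H p r (orc k w) w \<le> Rtilde H p r g w))"

(* Loop state: (w_L, z_L, w_H, z_H, number of oracle calls so far).
   Result: None if the loop does not terminate, otherwise Some (z_H, number of oracle calls). *)
definition binsearch :: "bound_type \<Rightarrow> 'x \<times> 'a \<Rightarrow> ('x \<times> 'a \<times> real) multiset \<Rightarrow> real \<Rightarrow> real
    \<Rightarrow> (nat \<Rightarrow> real \<Rightarrow> ('x \<times> 'a \<Rightarrow> real)) \<Rightarrow> (real \<times> nat) option" where
  "binsearch t p H \<beta> \<alpha> orc =
    (let r = target t;
         fL = orc 0 0; zL = fL p;
         fH = orc 1 (\<beta> / \<alpha>); zH = fH p;
         Rmin = Rsq H fL;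
         \<Delta> = \<alpha> * \<beta> / \<bar>r - zL\<bar> ^ 3
     in map_option (\<lambda>(wL, zL, wH, zH, k). (zH, k))
          (while_option
             (\<lambda>(wL, zL, wH, zH, k). \<bar>zH - zL\<bar> > \<alpha> \<and> \<bar>wH - wL\<bar> > \<Delta>)
             (\<lambda>(wL, zL, wH, zH, k).
                let w = (wH + wL) / 2; f = orc k w; z = f p
                in if Rsq H f \<ge> Rmin + \<beta> then (wL, zL, w, z, Suc k) else (w, z, wH, zH, Suc k))
             (0, zL, \<beta> / \<alpha>, zH, 2::nat)))"

definition near_opt :: "('x \<times> 'a \<Rightarrow> real) set \<Rightarrow> ('x \<times> 'a \<times> real) multiset \<Rightarrow> real \<Rightarrow> ('x \<times> 'a \<Rightarrow> real) set" where
  "near_opt F H \<beta> = {f \<in> F. Rsq H f \<le> Inf (Rsq H ` F) + \<beta>}"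

definition z_high :: "('x \<times> 'a \<Rightarrow> real) set \<Rightarrow> ('x \<times> 'a \<times> real) multiset \<Rightarrow> 'x \<times> 'a \<Rightarrow> real \<Rightarrow> real" where
  "z_high F H p \<beta> = Sup ((\<lambda>f. f p) ` near_opt F H \<beta>)"

definition z_low :: "('x \<times> 'a \<Rightarrow> real) set \<Rightarrow> ('x \<times> 'a \<times> real) multiset \<Rightarrow> 'x \<times> 'a \<Rightarrow> real \<Rightarrow> real" where
  "z_low F H p \<beta> = Inf ((\<lambda>f. f p) ` near_opt F H \<beta>)"

definition z_bound :: "bound_type \<Rightarrow> ('x \<times> 'a \<Rightarrow> real) set \<Rightarrow> ('x \<times> 'a \<times> real) multiset \<Rightarrow> 'x \<times> 'a \<Rightarrow> real \<Rightarrow> real" where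
  "z_bound t F H p \<beta> = (case t of High \<Rightarrow> z_high F H p \<beta> | Low \<Rightarrow> z_low F H p \<beta>)"

end

theory Submission
  imports Defs
begin


lemma Rsq_empty[simp]: "Rsq {#} f = 0" by (simp add: Rsq_def)
lemma Rsq_add[simp]: "Rsq (add_mset (x',a',r') H) f = (f (x',a') - r')^2 + Rsq H f"
  by (simp add: Rsq_def)

lemma sq_convex:
  fixes l a b r :: real
  assumes "0 \<le> l" "l \<le> 1"
  shows "(l*a + (1-l)*b - r)^2 \<le> l*(a-r)^2 + (1-l)*(b-r)^2"
proof -
  have "l*(a-r)^2 + (1-l)*(b-r)^2 - (l*a + (1-l)*b - r)^2 = l*(1-l)*(a-b)^2"
    by (simp add: power2_eq_square algebra_simps)
  moreover have "0 \<le> l*(1-l)*(a-b)^2" using assms by simp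
  ultimately show ?thesis by linarith
qed

lemma Rsq_convex:
  assumes "0 \<le> l" "l \<le> 1"
  shows "Rsq H (\<lambda>q. l * f q + (1 - l) * g q) \<le> l * Rsq H f + (1 - l) * Rsq H g"
proof (induction H)
  case empty then show ?case by simp
next
  case (add x H)
  obtain x' a' r' where x: "x = (x',a',r')" by (cases x)
  have "(l * f (x',a') + (1 - l) * g (x',a') - r')^2 \<le> l*(f (x',a') - r')^2 + (1-l)*(g (x',a') - r')^2"
    using sq_convex[OF assms] by blast
  then show ?case using add x by (simp add: algebra_simps)
qed

lemma Rsq_nonneg: "0 \<le> Rsq H f"
proof (induction H)
  case empty then show ?case by simp
next
  case (add x H)
  obtain x' a' r' where x: "x = (x',a',r')" by (cases x)
  then show ?case using add by simp
qed

definition minim where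
  "minim F H p r w f \<longleftrightarrow> f \<in> F \<and> (\<forall>g\<in>F. Rtilde H p r f w \<le> Rtilde H p r g w)"

lemma eps_lemma:
  fixes X K :: real
  assumes "\<forall>s. 0 < s \<and> s < 1 \<longrightarrow> 0 \<le> X + s*K"
  shows "0 \<le> X"
proof (rule ccontr)
  assume X: "\<not> 0 \<le> X"
  show False
  proof (cases "K \<le> 0")
    case True
    then have "0 \<le> X + (1/2)*K" using assms[rule_format, of "1/2"] by simp
    then show False using True X by linarith
  next
    case False
    define s where "s = min (1/2) (-X/(2*K))"
    have s: "0 < s" "s < 1" using False X by (auto simp: s_def divide_neg_pos)
    have "s*K \<le> (-X/(2*K))*K" using False by (intro mult_right_mono) (auto simp: s_def)
    also have "\<dots> = -X/2" using False by simp
    finally have "X + s*K < 0" using X by linarith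
    then show False using assms s by auto
  qed
qed

lemma FO:
  assumes m: "minim F H p r w f" and g: "g \<in> F" and cv: "convex_class F" and w: "0 \<le> w"
  shows "0 \<le> Rsq H g - Rsq H f + w*(f p - r)*(g p - f p)"
proof -
  define a where "a = f p - r"
  define c where "c = g p - f p"
  have "\<forall>s. 0 < s \<and> s < 1 \<longrightarrow> 0 \<le> (Rsq H g - Rsq H f + w*a*c) + s*(w*c^2/2)"
  proof (intro allI impI)
    fix s :: real assume s: "0 < s \<and> s < 1"
    define h where "h = (\<lambda>q. s * g q + (1 - s) * f q)"
    have fF: "f \<in> F" using m by (simp add: minim_def)
    have hF: "h \<in> F" using cv g fF s unfolding convex_class_def h_def by auto
    have 1: "Rtilde H p r f w \<le> Rtilde H p r h w" using m hF by (simp add: minim_def)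
    have 2: "Rsq H h \<le> s * Rsq H g + (1 - s) * Rsq H f" unfolding h_def
      using Rsq_convex[of s H g f] s by simp
    have 3: "h p - r = a + s * c" by (simp add: h_def a_def c_def algebra_simps)
    have 4: "Rsq H f + w/2*a^2 \<le> s * Rsq H g + (1 - s) * Rsq H f + w/2*(a + s*c)^2"
      using 1 2 3 unfolding Rtilde_def a_def[symmetric] by simp
    have 5: "s * Rsq H g + (1 - s) * Rsq H f + w/2*(a + s*c)^2 - (Rsq H f + w/2*a^2)
       = s * ((Rsq H g - Rsq H f + w*a*c) + s*(w*c^2/2))"
      by (simp add: power2_eq_square algebra_simps)
    have "0 \<le> s * ((Rsq H g - Rsq H f + w*a*c) + s*(w*c^2/2))" using 4 5 by linarith
    then show "0 \<le> (Rsq H g - Rsq H f + w*a*c) + s*(w*c^2/2)"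
      using s by (simp add: zero_le_mult_iff)
  qed
  then have "0 \<le> Rsq H g - Rsq H f + w*a*c" by (rule eps_lemma)
  then show ?thesis by (simp add: a_def c_def)
qed

lemma ln2_ge: "1/2 \<le> ln (2::real)"
proof -
  have "ln (1/2::real) \<le> 1/2 - 1" by (rule ln_le_minus_one) simp
  then show ?thesis by (simp add: ln_div)
qed


lemma main:
  fixes F :: "('x \<times> 'a \<Rightarrow> real) set" and H :: "('x \<times> 'a \<times> real) multiset"
    and p :: "'x \<times> 'a" and \<beta> \<alpha> :: real and t :: bound_type
    and orc :: "nat \<Rightarrow> real \<Rightarrow> ('x \<times> 'a \<Rightarrow> real)"
  assumes Fne: "F \<noteq> {}" and Fb: "\<forall>f\<in>F. \<forall>q. 0 \<le> f q \<and> f q \<le> 1"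
    and cv: "convex_class F" and bpos: "0 < \<beta>" and apos: "0 < \<alpha>" and a1: "\<alpha> < 1"
    and orac: "is_oracle F H p (target t) orc"
  shows "\<exists>z k. binsearch t p H \<beta> \<alpha> orc = Some (z, k) \<and>
               real k \<le> 6 * (1 + ln (1 / \<alpha>)) \<and>
               \<bar>z - z_bound t F H p \<beta>\<bar> \<le> \<alpha>"
proof -
  define r where "r = target t"
  define d where "d f = \<bar>f p - r\<bar>" for f :: "'x \<times> 'a \<Rightarrow> real"
  define \<sigma> :: real where "\<sigma> = (if t = High then -1 else 1)"
  have fpb: "0 \<le> f p \<and> f p \<le> 1" if "f \<in> F" for f using Fb that by blast
  have sig: "f p - r = \<sigma> * d f" if "f \<in> F" for f
  proof (cases t)
    case High
    then have "f p - r < 0" using fpb[OF that] by (auto simp: r_def target_def)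
    then show ?thesis using High by (simp add: d_def \<sigma>_def)
  next
    case Low
    then have "f p - r > 0" using fpb[OF that] by (auto simp: r_def target_def)
    then show ?thesis using Low by (simp add: d_def \<sigma>_def)
  qed
  have sig2: "\<sigma> * \<sigma> = 1" by (simp add: \<sigma>_def)
  have d1: "1 \<le> d f" "d f \<le> 2" if "f \<in> F" for f
    using fpb[OF that] by (cases t; force simp: d_def r_def target_def)+
  have dsq: "(f p - r)^2 = (d f)^2" for f by (simp add: d_def)
  have dprod: "(f p - r) * (g p - f p) = d f * (d g - d f)" if "f \<in> F" "g \<in> F" for f g
  proof -
    have "g p - f p = (g p - r) - (f p - r)" by simp
    then have "(f p - r) * (g p - f p) = (\<sigma> * d f) * (\<sigma> * d g - \<sigma> * d f)"
      using sig[OF that(1)] sig[OF that(2)] by simp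
    also have "\<dots> = (\<sigma> * \<sigma>) * (d f * (d g - d f))" by (simp add: algebra_simps)
    finally show ?thesis using sig2 by simp
  qed
  have ddiff: "\<bar>d f - d g\<bar> = \<bar>f p - g p\<bar>" if "f \<in> F" "g \<in> F" for f g
  proof -
    have "f p - g p = (f p - r) - (g p - r)" by simp
    also have "\<dots> = \<sigma> * (d f - d g)" using sig[OF that(1)] sig[OF that(2)] by (simp add: algebra_simps)
    finally show ?thesis by (simp add: \<sigma>_def abs_mult)
  qed
  let ?m = "minim F H p r"
  have orm: "?m w (orc k w)" if "0 \<le> w" for k w
    using orac that by (simp add: is_oracle_def minim_def r_def)
  have mF: "f \<in> F" if "?m w f" for w f using that by (simp add: minim_def)
  have mopt: "Rsq H f + w/2 * (d f)^2 \<le> Rsq H g + w/2 * (d g)^2" if "?m w f" "g \<in> F" for w f g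
    using that dsq unfolding minim_def Rtilde_def by metis
  have FOd: "0 \<le> Rsq H g - Rsq H f + w * (d f * (d g - d f))" if "?m w f" "g \<in> F" "0 \<le> w" for w f g
    using FO[OF that(1) that(2) cv that(3)] dprod[OF mF[OF that(1)] that(2)] by (simp add: mult.assoc)
  define fL0 where "fL0 = orc 0 0"
  define fH0 where "fH0 = orc 1 (\<beta>/\<alpha>)"
  define Rmin where "Rmin = Rsq H fL0"
  define d0 where "d0 = d fL0"
  define \<Delta> where "\<Delta> = \<alpha> * \<beta> / \<bar>r - fL0 p\<bar> ^ 3"
  define W0 where "W0 = \<beta> / \<alpha>"
  have mL0: "?m 0 fL0" using orm by (simp add: fL0_def)
  have fL0F: "fL0 \<in> F" using mF[OF mL0] .
  have Rmin_le: "Rmin \<le> Rsq H g" if "g \<in> F" for g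
    using mopt[OF mL0 that] by (simp add: Rmin_def)
  have InfR: "Inf (Rsq H ` F) = Rmin"
    by (rule cInf_eq_minimum) (use fL0F Rmin_le in \<open>auto simp: Rmin_def\<close>)
  define NO where "NO = near_opt F H \<beta>"
  have NO_def': "NO = {f \<in> F. Rsq H f \<le> Rmin + \<beta>}" by (simp add: NO_def near_opt_def InfR)
  have d0b: "1 \<le> d0" "d0 \<le> 2" using d1[OF fL0F] by (auto simp: d0_def)
  have \<Delta>_eq: "\<Delta> = \<alpha> * \<beta> / d0 ^ 3" by (simp add: \<Delta>_def d0_def d_def abs_minus_commute)
  have \<Delta>pos: "0 < \<Delta>" using d0b apos bpos by (simp add: \<Delta>_eq)
  have W0pos: "0 < W0" using apos bpos by (simp add: W0_def)

  have C0: "d f \<le> d g + \<alpha>" if "?m W0 f" "g \<in> NO" for f g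
  proof -
    have gF: "g \<in> F" and gR: "Rsq H g \<le> Rmin + \<beta>" using that(2) by (auto simp: NO_def')
    have fF: "f \<in> F" using mF[OF that(1)] .
    have "Rsq H f + W0/2 * (d f)^2 \<le> Rsq H g + W0/2 * (d g)^2" using mopt[OF that(1) gF] .
    moreover have "Rmin \<le> Rsq H f" using Rmin_le[OF fF] .
    ultimately have "W0/2 * ((d f)^2 - (d g)^2) \<le> \<beta>" using gR by (simp add: algebra_simps)
    then have "\<beta>/\<alpha> * ((d f)^2 - (d g)^2) \<le> 2 * \<beta>" by (simp add: W0_def)
    then have "\<beta> * ((d f)^2 - (d g)^2) \<le> \<beta> * (2 * \<alpha>)" using apos bpos
      by (simp add: field_simps)
    then have A: "(d f)^2 - (d g)^2 \<le> 2 * \<alpha>" using bpos by (rule mult_left_le_imp_le)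
    show ?thesis
    proof (rule ccontr)
      assume "\<not> ?thesis"
      then have "d f - d g > \<alpha>" by simp
      moreover have "d f + d g \<ge> 2" using d1[OF fF] d1[OF gF] by simp
      ultimately have "(d f - d g) * (d f + d g) > \<alpha> * 2" using apos
        by (intro mult_less_le_imp_less) auto
      then show False using A by (simp add: power2_eq_square algebra_simps)
    qed
  qed
  have Bf: "d f \<le> d g" if "?m w f" "0 < w" "Rmin + \<beta> \<le> Rsq H f" "g \<in> NO" for w f g
  proof -
    have gF: "g \<in> F" and gR: "Rsq H g \<le> Rmin + \<beta>" using that(4) by (auto simp: NO_def')
    have fF: "f \<in> F" using mF[OF that(1)] .
    have "Rsq H f + w/2 * (d f)^2 \<le> Rsq H g + w/2 * (d g)^2" using mopt[OF that(1) gF] .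
    then have "w * (d f)^2 \<le> w * (d g)^2" using gR that(3) by simp
    then have "(d f)^2 \<le> (d g)^2" using that(2) by simp
    then show ?thesis using d1[OF fF] d1[OF gF] by (simp add: power2_le_iff_abs_le)
  qed
  have KeyD: "d fL \<le> d fH + \<alpha>" if mL: "?m wL fL" and mH: "?m wH fH" and wL0: "0 \<le> wL"
     and wH0: "0 \<le> wH" and wd: "wH - wL \<le> \<Delta>" and RH: "Rmin + \<beta> < Rsq H fH" for wL wH fL fH
  proof (rule ccontr)
    assume neg: "\<not> ?thesis"
    have fLF: "fL \<in> F" using mF[OF mL] .
    have fHF: "fH \<in> F" using mF[OF mH] .
    define dL where "dL = d fL"
    define dH where "dH = d fH"
    have dLb: "1 \<le> dL" using d1[OF fLF] by (simp add: dL_def)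
    have dHb: "1 \<le> dH" using d1[OF fHF] by (simp add: dH_def)
    have del: "dL - dH > \<alpha>" using neg by (simp add: dL_def dH_def)
    have "Rsq H fH + wH/2 * dH^2 \<le> Rmin + wH/2 * d0^2"
      using mopt[OF mH fL0F] by (simp add: Rmin_def d0_def dH_def)
    then have hb: "\<beta> < wH/2 * (d0^2 - dH^2)" using RH by (simp add: algebra_simps)
    have pos1: "0 < d0^2 - dH^2"
    proof (rule ccontr)
      assume "\<not> 0 < d0^2 - dH^2"
      then have "wH/2 * (d0^2 - dH^2) \<le> 0" using wH0 by (simp add: mult_nonneg_nonpos)
      then show False using hb bpos by linarith
    qed
    have dHd0: "dH < d0" using pos1 d0b dHb by (smt (verit) power_mono)
    have F1: "0 \<le> Rsq H fL - Rsq H fH + wH * (dH * (dL - dH))"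
      using FOd[OF mH fLF wH0] by (simp add: dL_def dH_def)
    have F2: "0 \<le> Rsq H fH - Rsq H fL + wL * (dL * (dH - dL))"
      using FOd[OF mL fHF wL0] by (simp add: dL_def dH_def)
    have "0 \<le> (dL - dH) * (wH * dH - wL * dL)" using F1 F2 by (simp add: algebra_simps)
    then have G: "wL * dL \<le> wH * dH" using del apos by (simp add: zero_le_mult_iff)
    have "wL * (dL - dH) \<le> (wH - wL) * dH" using G by (simp add: algebra_simps)
    also have "\<dots> \<le> \<Delta> * dH" using wd dHb by (intro mult_right_mono) auto
    finally have E1: "wL * (dL - dH) \<le> \<Delta> * dH" .
    have "\<beta> * (dH + \<alpha>) < wH/2 * (d0^2 - dH^2) * (dH + \<alpha>)"
      using hb dHb apos by (intro mult_strict_right_mono) auto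
    also have "\<dots> \<le> wH/2 * (d0^2 * (2 * d0))"
    proof -
      have "(d0^2 - dH^2) * (dH + \<alpha>) \<le> d0^2 * (2 * d0)"
        using pos1 dHb dHd0 a1 d0b apos by (intro mult_mono) auto
      then show ?thesis using wH0 by (simp add: mult.assoc mult_left_mono)
    qed
    also have "\<dots> = wH * d0^3" by (simp add: power2_eq_square power3_eq_cube)
    finally have E2: "\<beta> * (dH + \<alpha>) < wH * d0^3" .
    have D3: "\<Delta> * d0^3 = \<alpha> * \<beta>" using d0b by (simp add: \<Delta>_eq)
    have "wH * d0^3 - \<Delta> * d0^3 \<le> wL * d0^3" using wd d0b by (simp add: left_diff_distrib[symmetric])
    then have E3: "\<beta> * dH < wL * d0^3" using E2 D3 by (simp add: algebra_simps)
    have "wL * (dL - dH) * d0^3 \<le> \<Delta> * dH * d0^3" using E1 d0b by (intro mult_right_mono) auto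
    also have "\<dots> = \<alpha> * (\<beta> * dH)" using D3 by (simp add: algebra_simps)
    also have "\<dots> < \<alpha> * (wL * d0^3)" using E3 apos by simp
    finally have E4: "wL * (dL - dH) * d0^3 < \<alpha> * (wL * d0^3)" .
    have pos2: "0 < wL * d0^3" using E3 bpos dHb by (smt (verit) mult_pos_pos)
    have "\<alpha> * (wL * d0^3) \<le> (dL - dH) * (wL * d0^3)" using del pos2 by (intro mult_right_mono) auto
    then show False using E4 by (simp add: algebra_simps)
  qed
  define b where "b = (\<lambda>(wL::real, zL::real, wH::real, zH::real, k::nat). \<bar>zH - zL\<bar> > \<alpha> \<and> \<bar>wH - wL\<bar> > \<Delta>)"
  define c where "c = (\<lambda>(wL::real, zL::real, wH::real, zH::real, k::nat).
                let w = (wH + wL) / 2; f = orc k w; z = f p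
                in if Rsq H f \<ge> Rmin + \<beta> then (wL, zL, w, z, Suc k) else (w, z, wH, zH, Suc k))"
  define s0 where "s0 = (0::real, fL0 p, \<beta> / \<alpha>, fH0 p, 2::nat)"
  have bs: "binsearch t p H \<beta> \<alpha> orc = map_option (\<lambda>(wL, zL, wH, zH, k). (zH, k)) (while_option b c s0)"
    unfolding binsearch_def b_def c_def s0_def r_def[symmetric] fL0_def fH0_def Rmin_def \<Delta>_def Let_def
    by simp
  define P where "P = (\<lambda>(wL::real, zL::real, wH::real, zH::real, k::nat).
     0 \<le> wL \<and> 2 \<le> k \<and> wH - wL = W0 / 2^(k-2) \<and> (k = 2 \<or> \<Delta> < W0 / 2^(k-3)) \<and>
     (\<exists>fL. ?m wL fL \<and> fL p = zL \<and> Rsq H fL \<le> Rmin + \<beta>) \<and>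
     (\<exists>fH. ?m wH fH \<and> fH p = zH \<and> (\<forall>g\<in>NO. d fH \<le> d g + \<alpha>)))"
  have P0: "P s0"
    unfolding P_def s0_def
    using mL0 orm[of "\<beta>/\<alpha>" 1] C0 apos bpos by (auto simp: W0_def fH0_def Rmin_def)
  have step: "P (c s) \<and> (N - (snd (snd (snd (snd (c s)))))) < N - snd (snd (snd (snd s)))"
    if Ps: "P s" and bs: "b s" and N: "\<forall>s. P s \<and> b s \<longrightarrow> snd (snd (snd (snd s))) < N" for s N
  proof -
    obtain wL zL wH zH k where s: "s = (wL, zL, wH, zH, k)" by (cases s) auto
    have kN: "k < N" using N Ps bs s by auto
    have wL0: "0 \<le> wL" and k2: "2 \<le> k" and wid: "wH - wL = W0 / 2^(k-2)"
      using Ps by (auto simp: P_def s)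
    obtain fL where mL: "?m wL fL" "fL p = zL" "Rsq H fL \<le> Rmin + \<beta>" using Ps by (auto simp: P_def s)
    obtain fH where mH: "?m wH fH" "fH p = zH" "\<forall>g\<in>NO. d fH \<le> d g + \<alpha>" using Ps by (auto simp: P_def s)
    have bw: "\<Delta> < \<bar>wH - wL\<bar>" using bs by (simp add: b_def s)
    have widpos: "0 < wH - wL" using wid W0pos by simp
    define w where "w = (wH + wL) / 2"
    define f where "f = orc k w"
    have wpos: "0 < w" using widpos wL0 by (simp add: w_def)
    have mf: "?m w f" using orm[of w k] wpos by (simp add: f_def)
    have e1: "Suc k - 2 = Suc (k - 2)" "Suc k - 3 = k - 2" using k2 by auto
    have p2: "(2::real)^(Suc k - 2) = 2 * 2^(k-2)" by (simp only: e1(1) power_Suc)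
    have half1: "w - wL = W0 / 2^(Suc k - 2)"
    proof -
      have "w - wL = (wH - wL)/2" by (simp add: w_def field_simps)
      also have "\<dots> = W0 / 2^(k-2) / 2" using wid by simp
      finally show ?thesis unfolding p2 by simp
    qed
    have half2: "wH - w = W0 / 2^(Suc k - 2)"
    proof -
      have "wH - w = (wH - wL)/2" by (simp add: w_def field_simps)
      also have "\<dots> = W0 / 2^(k-2) / 2" using wid by simp
      finally show ?thesis unfolding p2 by simp
    qed
    have bw2: "\<Delta> < W0 / 2^(Suc k - 3)" using bw wid widpos by (simp add: e1)
    show ?thesis
    proof (cases "Rmin + \<beta> \<le> Rsq H f")
      case True
      have cs: "c s = (wL, zL, w, f p, Suc k)" using True by (simp add: c_def s w_def f_def Let_def)
      have "\<forall>g\<in>NO. d f \<le> d g + \<alpha>" using Bf[OF mf wpos True] apos by (smt (verit))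
      then show ?thesis using cs wL0 k2 half1 bw2 mL mf kN by (auto simp: P_def s)
    next
      case False
      have cs: "c s = (w, f p, wH, zH, Suc k)" using False by (simp add: c_def s w_def f_def Let_def)
      show ?thesis using cs wpos k2 half2 bw2 mH mf kN False by (auto simp: P_def s)
    qed
  qed
  define N where "N = nat \<lceil>W0/\<Delta>\<rceil> + 3"
  have Nb: "\<forall>s. P s \<and> b s \<longrightarrow> snd (snd (snd (snd s))) < N"
  proof (intro allI impI)
    fix s assume Pb: "P s \<and> b s"
    obtain wL zL wH zH k where s: "s = (wL, zL, wH, zH, k)" by (cases s) auto
    have k2: "2 \<le> k" and wid: "wH - wL = W0 / 2^(k-2)" using Pb by (auto simp: P_def s)
    have "\<Delta> < \<bar>wH - wL\<bar>" using Pb by (simp add: b_def s)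
    then have "\<Delta> < W0 / 2^(k-2)" using wid W0pos by simp
    then have "\<Delta> * 2^(k-2) < W0" by (simp add: field_simps)
    then have "2^(k-2) < W0 / \<Delta>" using \<Delta>pos by (simp add: field_simps)
    moreover have "real (k-2) < 2^(k-2)"
      using of_nat_less_of_nat_power_cancel_iff[of "k-2" 2 "k-2"] less_exp[of "k-2"] by simp
    ultimately have "real (k-2) < \<lceil>W0/\<Delta>\<rceil>" by linarith
    then have "k - 2 < nat \<lceil>W0/\<Delta>\<rceil>" by linarith
    then show "snd (snd (snd (snd s))) < N" using k2 by (simp add: s N_def)
  qed
  obtain tf where tf: "while_option b c s0 = Some tf"
    using measure_while_option_Some[of P b c "\<lambda>s. N - snd (snd (snd (snd s)))" s0] step[OF _ _ Nb] P0
    by blast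
  have Ptf: "P tf" using while_option_rule[of P b c, OF _ tf P0] step[OF _ _ Nb] by blast
  have nb: "\<not> b tf" using while_option_stop[OF tf] .
  obtain wL zL wH zH k where tfe: "tf = (wL, zL, wH, zH, k)" by (cases tf) auto
  have wL0: "0 \<le> wL" and k2: "2 \<le> k" and wid: "wH - wL = W0 / 2^(k-2)"
    and kc: "k = 2 \<or> \<Delta> < W0 / 2^(k-3)" using Ptf by (auto simp: P_def tfe)
  obtain fL where mL: "?m wL fL" "fL p = zL" "Rsq H fL \<le> Rmin + \<beta>" using Ptf by (auto simp: P_def tfe)
  obtain fH where mH: "?m wH fH" "fH p = zH" "\<forall>g\<in>NO. d fH \<le> d g + \<alpha>" using Ptf by (auto simp: P_def tfe)
  have fLF: "fL \<in> F" using mF[OF mL(1)] .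
  have fHF: "fH \<in> F" using mF[OF mH(1)] .
  have fLNO: "fL \<in> NO" using fLF mL(3) by (simp add: NO_def')
  have widpos: "0 < wH - wL" using wid W0pos by simp
  have ex: "\<exists>g\<in>NO. d g \<le> d fH + \<alpha>"
  proof (cases "\<bar>zH - zL\<bar> \<le> \<alpha>")
    case True
    have "\<bar>d fL - d fH\<bar> = \<bar>zL - zH\<bar>" using ddiff[OF fLF fHF] mL(2) mH(2) by simp
    then have "d fL \<le> d fH + \<alpha>" using True by (simp add: abs_minus_commute)
    then show ?thesis using fLNO by blast
  next
    case False
    then have wd: "\<bar>wH - wL\<bar> \<le> \<Delta>" using nb by (auto simp: b_def tfe)
    show ?thesis
    proof (cases "Rsq H fH \<le> Rmin + \<beta>")
      case True
      then show ?thesis using fHF apos by (auto simp: NO_def')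
    next
      case False
      have "d fL \<le> d fH + \<alpha>"
        by (rule KeyD[OF mL(1) mH(1) wL0]) (use widpos wd False wL0 in auto)
      then show ?thesis using fLNO by blast
    qed
  qed
  have acc: "\<bar>zH - z_bound t F H p \<beta>\<bar> \<le> \<alpha>"
  proof -
    obtain g0 where g0: "g0 \<in> NO" "d g0 \<le> d fH + \<alpha>" using ex by blast
    have NOF: "NO \<subseteq> F" by (auto simp: NO_def')
    have S0: "(\<lambda>f. f p) ` NO \<noteq> {}" using fLNO by blast
    show ?thesis
    proof (cases t)
      case High
      have dd: "d f = 2 - f p" if "f \<in> F" for f using fpb[OF that] High by (simp add: d_def r_def target_def)
      have zb: "z_bound t F H p \<beta> = Sup ((\<lambda>f. f p) ` NO)" using High by (simp add: z_bound_def z_high_def NO_def)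
      have g0F: "g0 \<in> F" using g0 NOF by auto
      have bdd: "bdd_above ((\<lambda>f. f p) ` NO)" using NOF fpb by (auto intro!: bdd_aboveI[of _ 1])
      have "Sup ((\<lambda>f. f p) ` NO) \<le> zH + \<alpha>"
      proof (rule cSup_least[OF S0])
        fix x assume "x \<in> (\<lambda>f. f p) ` NO"
        then obtain g where g: "g \<in> NO" "x = g p" by blast
        have gF: "g \<in> F" using g NOF by auto
        have "d fH \<le> d g + \<alpha>" using mH(3) g by auto
        then show "x \<le> zH + \<alpha>" using dd[OF fHF] dd[OF gF] mH(2) g by auto
      qed
      moreover have "g0 p \<le> Sup ((\<lambda>f. f p) ` NO)" using g0 bdd by (intro cSup_upper) auto
      moreover have "zH - \<alpha> \<le> g0 p" using g0 dd[OF fHF] dd[OF g0F] mH(2) by auto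
      ultimately show ?thesis using zb by simp
    next
      case Low
      have dd: "d f = f p + 1" if "f \<in> F" for f using fpb[OF that] Low by (simp add: d_def r_def target_def)
      have zb: "z_bound t F H p \<beta> = Inf ((\<lambda>f. f p) ` NO)" using Low by (simp add: z_bound_def z_low_def NO_def)
      have g0F: "g0 \<in> F" using g0 NOF by auto
      have bdd: "bdd_below ((\<lambda>f. f p) ` NO)" using NOF fpb by (auto intro!: bdd_belowI[of _ 0])
      have "zH - \<alpha> \<le> Inf ((\<lambda>f. f p) ` NO)"
      proof (rule cInf_greatest[OF S0])
        fix x assume "x \<in> (\<lambda>f. f p) ` NO"
        then obtain g where g: "g \<in> NO" "x = g p" by blast
        have gF: "g \<in> F" using g NOF by auto
        have "d fH \<le> d g + \<alpha>" using mH(3) g by auto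
        then show "zH - \<alpha> \<le> x" using dd[OF fHF] dd[OF gF] mH(2) g by auto
      qed
      moreover have "Inf ((\<lambda>f. f p) ` NO) \<le> g0 p" using g0 bdd by (intro cInf_lower) auto
      moreover have "g0 p \<le> zH + \<alpha>" using g0 dd[OF fHF] dd[OF g0F] mH(2) by auto
      ultimately show ?thesis using zb by simp
    qed
  qed
  have kb: "real k \<le> 6 * (1 + ln (1 / \<alpha>))"
  proof -
    define L where "L = ln (1/\<alpha>)"
    have L0: "0 \<le> L" using apos a1 by (simp add: L_def)
    show ?thesis
    proof (cases "k = 2")
      case True then show ?thesis using L0 by (simp add: L_def[symmetric])
    next
      case False
      then have k3: "3 \<le> k" and kd: "\<Delta> < W0 / 2^(k-3)" using k2 kc by auto
      have "2^(k-3) < W0 / \<Delta>" using kd \<Delta>pos by (simp add: field_simps)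
      also have "W0 / \<Delta> = d0^3 / \<alpha>^2" using apos bpos d0b
        by (simp add: W0_def \<Delta>_eq field_simps power2_eq_square power3_eq_cube)
      also have "\<dots> \<le> 8 / \<alpha>^2"
      proof -
        have "d0^3 \<le> 2^3" using d0b by (intro power_mono) auto
        then show ?thesis using apos by (simp add: divide_right_mono)
      qed
      finally have lt: "(2::real)^(k-3) < 8 / \<alpha>^2" .
      have "ln ((2::real)^(k-3)) < ln (8 / \<alpha>^2)" using lt apos by (simp add: ln_less_cancel_iff)
      moreover have "ln ((2::real)^(k-3)) = real (k-3) * ln 2" by (simp add: ln_realpow)
      moreover have "ln (8 / \<alpha>^2) = 3 * ln 2 + 2 * L"
      proof -
        have "ln (8 / \<alpha>^2) = ln 8 - ln (\<alpha>^2)" using apos by (simp add: ln_div)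
        moreover have "ln (8::real) = 3 * ln 2" using ln_realpow[of 2 3] by simp
        moreover have "ln (\<alpha>^2) = 2 * ln \<alpha>" using apos by (simp add: ln_realpow)
        moreover have "L = - ln \<alpha>" using apos by (simp add: L_def ln_div)
        ultimately show ?thesis by simp
      qed
      ultimately have "real (k-3) * ln 2 < 3 * ln 2 + 2 * L" by simp
      moreover have "2 * L \<le> 4 * L * ln 2"
      proof -
        have "(4 * L) * (1/2) \<le> (4 * L) * ln 2" using ln2_ge L0 by (intro mult_left_mono) auto
        then show ?thesis by simp
      qed
      ultimately have "(real (k-3) - 3 - 4 * L) * ln 2 < 0" by (simp add: algebra_simps)
      then have "real (k-3) - 3 - 4 * L < 0" using ln2_ge by (simp add: mult_less_0_iff)
      then have "real k < 6 + 4 * L" using k3 by (simp add: of_nat_diff)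
      then show ?thesis using L0 by (simp add: L_def[symmetric])
    qed
  qed
  show ?thesis using bs tf tfe acc kb by simp
qed


theorem theorem1:
  "\<exists>C::real. \<forall>(F :: ('x \<times> 'a::finite \<Rightarrow> real) set) (H :: ('x \<times> 'a \<times> real) multiset)
      (p :: 'x \<times> 'a) (\<beta>::real) (\<alpha>::real) (t::bound_type) orc.
     F \<noteq> {} \<and>
     (\<forall>f\<in>F. \<forall>q. 0 \<le> f q \<and> f q \<le> 1) \<and>
     convex_class F \<and>
     closed F \<and>
     (\<forall>(x', a', r') \<in> set_mset H. 0 \<le> r' \<and> r' \<le> 1) \<and>
     0 < \<beta> \<and> 0 < \<alpha> \<and> \<alpha> < 1 \<and>
     is_oracle F H p (target t) orc
     \<longrightarrow> (\<exists>z k. binsearch t p H \<beta> \<alpha> orc = Some (z, k) \<and>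
               real k \<le> C * (1 + ln (1 / \<alpha>)) \<and>
               \<bar>z - z_bound t F H p \<beta>\<bar> \<le> \<alpha>)"
  apply (rule exI[of _ 6])
  apply (intro allI impI)
  apply (elim conjE)
  apply (rule main)
  apply assumption+
  done

end
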